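(* Let $(B,g)$ be a feasible tradable credit scheme and let the travel times $\tau$ have a convex potential function. Then $\lambda\in\mathbb{R}_{\ge0}$ is a market equilibrium price if and only if $\lambda\in[\underline\lambda,\overline\lambda]$, where $\underline\lambda=\min\{\lambda\ge0:\exists x\in\mathrm{WE}(\lambda)\text{ with }G(x)\le B\}$ and $\overline\lambda=\sup\bigl(\{\lambda\ge0:\exists x\in\mathrm{WE}(\lambda)\text{ with }G(x)\ge B\}\cup\{0\}\bigr)$.
   Context: Let $G=(V,E)$ be a directed graph and $I$ a finite set of commodities; commodity $i$ has source $s_i$, sink $t_i$, demand $d_i>0$; $\mathcal P_i$ is its set of simple $s_i$–$t_i$ paths, $\mathcal P=\{(i,p)\}$. A flow $x\in\mathbb{R}^{\mathcal P}_{\ge0}$ is feasible if $\sum_{p\in\mathcal P_i}x_{i,p}=d_i$; $\mathcal F$ is the set of feasible flows; $x_e$ is the total flow on edge $e$. A tradable credit scheme is a pair $(B,g)$ with $B\ge0$ (number of credits) and credit charges $g_e\ge0$ for $e\in E$; $G(x)=\sum_eg_ex_e$. It is feasible if some $x\in\mathcal F$ has $G(x)\le B$. Travel times $\tau_{i,p}:\mathcal F\to\mathbb{R}$ have a convex potential: a convex differentiable $\Phi$ with $\tau_{i,p}(x)=\partial\Phi/\partial x_{i,p}(x)$ on $\mathcal F$. For $\lambda\ge0$, $c^\lambda_{i,p}(x)=\tau_{i,p}(x)+\lambda\sum_{e\in p}g_e$; $x\in\mathrm{WE}(\lambda)$ means $x\in\mathcal F$ and $x_{i,p}>0$ implies $c^\lambda_{i,p}(x)\le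 c^\lambda_{i,q}(x)$ for all $q\in\mathcal P_i$. A pair $(x,\lambda)$ with $x\in\mathcal F$, $\lambda\ge0$ is a market equilibrium if $x\in\mathrm{WE}(\lambda)$, $G(x)\le B$ and $\lambda(G(x)-B)=0$; then $\lambda$ is a market equilibrium price. *)

theory Defs
  imports "HOL-Analysis.Analysis"
begin

definition pedges :: "'v list \<Rightarrow> ('v \<times> 'v) set" where
  "pedges vs = set (zip vs (tl vs))"

definition spath :: "('v \<times> 'v) set \<Rightarrow> 'v \<Rightarrow> 'v \<Rightarrow> 'v list \<Rightarrow> bool" where
  "spath E a b vs \<longleftrightarrow> vs \<noteq> [] \<and> hd vs = a \<and> last vs = b \<and> distinct vs \<and> pedges vs \<subseteq> E"

definition Paths :: "('v \<times> 'v) set \<Rightarrow> 'i set \<Rightarrow> ('i \<Rightarrow> 'v) \<Rightarrow> ('i \<Rightarrow> 'v) \<Rightarrow> ('i \<times> 'v list) set" where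
  "Paths E I s t = {(i, p). i \<in> I \<and> spath E (s i) (t i) p}"

text \<open>R^P: real functions on P (extended by 0 outside P).\<close>
definition RP :: "('v \<times> 'v) set \<Rightarrow> 'i set \<Rightarrow> ('i \<Rightarrow> 'v) \<Rightarrow> ('i \<Rightarrow> 'v) \<Rightarrow> ('i \<times> 'v list \<Rightarrow> real) set" where
  "RP E I s t = {h. \<forall>ip. ip \<notin> Paths E I s t \<longrightarrow> h ip = 0}"

definition flows :: "('v \<times> 'v) set \<Rightarrow> 'i set \<Rightarrow> ('i \<Rightarrow> 'v) \<Rightarrow> ('i \<Rightarrow> 'v) \<Rightarrow> ('i \<Rightarrow> real)
      \<Rightarrow> ('i \<times> 'v list \<Rightarrow> real) set" where
  "flows E I s t d = {x. x \<in> RP E I s t \<and> (\<forall>ip \<in> Paths E I s t. x ip \<ge> 0) \<and>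
      (\<forall>i \<in> I. (\<Sum>p \<in> {p. spath E (s i) (t i) p}. x (i, p)) = d i)}"

definition edge_flow :: "('v \<times> 'v) set \<Rightarrow> 'i set \<Rightarrow> ('i \<Rightarrow> 'v) \<Rightarrow> ('i \<Rightarrow> 'v)
      \<Rightarrow> ('i \<times> 'v list \<Rightarrow> real) \<Rightarrow> 'v \<times> 'v \<Rightarrow> real" where
  "edge_flow E I s t x e = (\<Sum>ip \<in> Paths E I s t. if e \<in> pedges (snd ip) then x ip else 0)"

definition Gtot :: "('v \<times> 'v) set \<Rightarrow> 'i set \<Rightarrow> ('i \<Rightarrow> 'v) \<Rightarrow> ('i \<Rightarrow> 'v)
      \<Rightarrow> ('v \<times> 'v \<Rightarrow> real) \<Rightarrow> ('i \<times> 'v list \<Rightarrow> real) \<Rightarrow> real" where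
  "Gtot E I s t g x = (\<Sum>e \<in> E. g e * edge_flow E I s t x e)"

definition feasible_scheme :: "('v \<times> 'v) set \<Rightarrow> 'i set \<Rightarrow> ('i \<Rightarrow> 'v) \<Rightarrow> ('i \<Rightarrow> 'v) \<Rightarrow> ('i \<Rightarrow> real)
      \<Rightarrow> real \<Rightarrow> ('v \<times> 'v \<Rightarrow> real) \<Rightarrow> bool" where
  "feasible_scheme E I s t d B g \<longleftrightarrow> B \<ge> 0 \<and> (\<forall>e \<in> E. g e \<ge> 0) \<and>
      (\<exists>x \<in> flows E I s t d. Gtot E I s t g x \<le> B)"

definition normP :: "('i \<times> 'v list) set \<Rightarrow> ('i \<times> 'v list \<Rightarrow> real) \<Rightarrow> real" where
  "normP P h = sqrt (\<Sum>ip \<in> P. (h ip)\<^sup>2)"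

definition has_gradient_at ::
  "('v \<times> 'v) set \<Rightarrow> 'i set \<Rightarrow> ('i \<Rightarrow> 'v) \<Rightarrow> ('i \<Rightarrow> 'v)
    \<Rightarrow> (('i \<times> 'v list \<Rightarrow> real) \<Rightarrow> real) \<Rightarrow> ('i \<times> 'v list \<Rightarrow> real) \<Rightarrow> ('i \<times> 'v list \<Rightarrow> real) \<Rightarrow> bool" where
  "has_gradient_at E I s t \<Phi> x D \<longleftrightarrow>
     (\<forall>\<epsilon>>0. \<exists>\<delta>>0. \<forall>h \<in> RP E I s t. normP (Paths E I s t) h < \<delta> \<longrightarrow>
        \<bar>\<Phi> (\<lambda>ip. x ip + h ip) - \<Phi> x - (\<Sum>ip \<in> Paths E I s t. D ip * h ip)\<bar>
          \<le> \<epsilon> * normP (Paths E I s t) h)"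

definition has_convex_potential ::
  "('v \<times> 'v) set \<Rightarrow> 'i set \<Rightarrow> ('i \<Rightarrow> 'v) \<Rightarrow> ('i \<Rightarrow> 'v) \<Rightarrow> ('i \<Rightarrow> real)
    \<Rightarrow> ('i \<times> 'v list \<Rightarrow> ('i \<times> 'v list \<Rightarrow> real) \<Rightarrow> real) \<Rightarrow> bool" where
  "has_convex_potential E I s t d \<tau> \<longleftrightarrow>
     (\<exists>\<Phi>. (\<forall>x \<in> RP E I s t. \<forall>y \<in> RP E I s t. \<forall>u::real. 0 \<le> u \<and> u \<le> 1 \<longrightarrow>
              \<Phi> (\<lambda>ip. (1 - u) * x ip + u * y ip) \<le> (1 - u) * \<Phi> x + u * \<Phi> y)
        \<and> (\<forall>x \<in> RP E I s t. \<exists>D. has_gradient_at E I s t \<Phi> x D)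
        \<and> (\<forall>x \<in> flows E I s t d. has_gradient_at E I s t \<Phi> x (\<lambda>ip. \<tau> ip x)))"

definition cost :: "('i \<times> 'v list \<Rightarrow> ('i \<times> 'v list \<Rightarrow> real) \<Rightarrow> real) \<Rightarrow> ('v \<times> 'v \<Rightarrow> real)
      \<Rightarrow> real \<Rightarrow> 'i \<times> 'v list \<Rightarrow> ('i \<times> 'v list \<Rightarrow> real) \<Rightarrow> real" where
  "cost \<tau> g lam ip x = \<tau> ip x + lam * (\<Sum>e \<in> pedges (snd ip). g e)"

definition WE :: "('v \<times> 'v) set \<Rightarrow> 'i set \<Rightarrow> ('i \<Rightarrow> 'v) \<Rightarrow> ('i \<Rightarrow> 'v) \<Rightarrow> ('i \<Rightarrow> real)
      \<Rightarrow> ('i \<times> 'v list \<Rightarrow> ('i \<times> 'v list \<Rightarrow> real) \<Rightarrow> real) \<Rightarrow> ('v \<times> 'v \<Rightarrow> real) \<Rightarrow> real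
      \<Rightarrow> ('i \<times> 'v list \<Rightarrow> real) set" where
  "WE E I s t d \<tau> g lam = {x. x \<in> flows E I s t d \<and>
      (\<forall>i p. (i, p) \<in> Paths E I s t \<and> x (i, p) > 0 \<longrightarrow>
         (\<forall>q. spath E (s i) (t i) q \<longrightarrow> cost \<tau> g lam (i, p) x \<le> cost \<tau> g lam (i, q) x))}"

definition market_eq :: "('v \<times> 'v) set \<Rightarrow> 'i set \<Rightarrow> ('i \<Rightarrow> 'v) \<Rightarrow> ('i \<Rightarrow> 'v) \<Rightarrow> ('i \<Rightarrow> real)
      \<Rightarrow> ('i \<times> 'v list \<Rightarrow> ('i \<times> 'v list \<Rightarrow> real) \<Rightarrow> real) \<Rightarrow> real \<Rightarrow> ('v \<times> 'v \<Rightarrow> real)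
      \<Rightarrow> ('i \<times> 'v list \<Rightarrow> real) \<Rightarrow> real \<Rightarrow> bool" where
  "market_eq E I s t d \<tau> B g x lam \<longleftrightarrow> x \<in> flows E I s t d \<and> lam \<ge> 0 \<and>
      x \<in> WE E I s t d \<tau> g lam \<and> Gtot E I s t g x \<le> B \<and> lam * (Gtot E I s t g x - B) = 0"

definition market_eq_price :: "('v \<times> 'v) set \<Rightarrow> 'i set \<Rightarrow> ('i \<Rightarrow> 'v) \<Rightarrow> ('i \<Rightarrow> 'v) \<Rightarrow> ('i \<Rightarrow> real)
      \<Rightarrow> ('i \<times> 'v list \<Rightarrow> ('i \<times> 'v list \<Rightarrow> real) \<Rightarrow> real) \<Rightarrow> real \<Rightarrow> ('v \<times> 'v \<Rightarrow> real)
      \<Rightarrow> real \<Rightarrow> bool" where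
  "market_eq_price E I s t d \<tau> B g lam \<longleftrightarrow> (\<exists>x. market_eq E I s t d \<tau> B g x lam)"

end

theory Submission
  imports Defs
begin

lemma set_sub_pedges:
  assumes "vs \<noteq> []" shows "set vs \<subseteq> insert (hd vs) (snd ` pedges vs)"
proof -
  obtain a rest where vs: "vs = a # rest" using assms by (cases vs) auto
  have "map snd (zip (a # rest) rest) = rest"
    by (simp add: map_snd_zip_take)
  hence "set rest = snd ` set (zip (a # rest) rest)"
    by (metis set_map)
  thus ?thesis by (auto simp: vs pedges_def)
qed

lemma finite_Paths:
  assumes "finite E" "finite I"
  shows "finite (Paths E I s t)"
proof -
  define V where "V = s ` I \<union> snd ` E"
  have fV: "finite V" using assms by (simp add: V_def)
  have "Paths E I s t \<subseteq> I \<times> {vs. set vs \<subseteq> V \<and> length vs \<le> card V}"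
  proof
    fix ip assume "ip \<in> Paths E I s t"
    then obtain i p where ip: "ip = (i,p)" "i \<in> I" "spath E (s i) (t i) p"
      by (auto simp: Paths_def)
    hence sp: "p \<noteq> []" "hd p = s i" "distinct p" "pedges p \<subseteq> E" by (auto simp: spath_def)
    have "snd ` pedges p \<subseteq> snd ` E" using sp(4) by (rule image_mono)
    hence "set p \<subseteq> insert (s i) (snd ` E)" using set_sub_pedges[OF sp(1)] sp(2) by blast
    hence "set p \<subseteq> V" using ip(2) by (auto simp: V_def)
    moreover have "length p \<le> card V"
      using distinct_card[OF sp(3)] card_mono[OF fV \<open>set p \<subseteq> V\<close>] by simp
    ultimately show "ip \<in> I \<times> {vs. set vs \<subseteq> V \<and> length vs \<le> card V}" using ip by auto
  qed
  moreover have "finite (I \<times> {vs. set vs \<subseteq> V \<and> length vs \<le> card V})"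
    using assms fV by (simp add: finite_lists_length_le)
  ultimately show ?thesis by (rule finite_subset)
qed


definition gpc :: "('v \<times> 'v \<Rightarrow> real) \<Rightarrow> 'i \<times> 'v list \<Rightarrow> real" where
  "gpc g ip = (\<Sum>e\<in>pedges (snd ip). g e)"

definition shift :: "('a \<Rightarrow> real) \<Rightarrow> 'a \<Rightarrow> 'a \<Rightarrow> real \<Rightarrow> 'a \<Rightarrow> real" where
  "shift x a b u = (\<lambda>ip. x ip + (if ip = b then u else 0) - (if ip = a then u else 0))"

locale mkt =
  fixes E :: "('v \<times> 'v) set" and I :: "'i set" and s t :: "'i \<Rightarrow> 'v" and d :: "'i \<Rightarrow> real"
    and B :: real and g :: "'v \<times> 'v \<Rightarrow> real"
    and \<tau> :: "'i \<times> 'v list \<Rightarrow> ('i \<times> 'v list \<Rightarrow> real) \<Rightarrow> real"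
    and \<Phi> :: "('i \<times> 'v list \<Rightarrow> real) \<Rightarrow> real"
  assumes finE: "finite E" and finI: "finite I" and dpos: "\<forall>i\<in>I. d i > 0"
    and feas: "feasible_scheme E I s t d B g"
    and cvx: "\<forall>x\<in>RP E I s t. \<forall>y\<in>RP E I s t. \<forall>u::real. 0 \<le> u \<and> u \<le> 1 \<longrightarrow>
              \<Phi> (\<lambda>ip. (1 - u) * x ip + u * y ip) \<le> (1 - u) * \<Phi> x + u * \<Phi> y"
    and grad: "\<forall>x\<in>RP E I s t. \<exists>D. has_gradient_at E I s t \<Phi> x D"
    and gradtau: "\<forall>x\<in>flows E I s t d. has_gradient_at E I s t \<Phi> x (\<lambda>ip. \<tau> ip x)"
begin

abbreviation "PP \<equiv> Paths E I s t"
abbreviation "RR \<equiv> RP E I s t"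
abbreviation "FF \<equiv> flows E I s t d"
abbreviation "GG \<equiv> Gtot E I s t g"
abbreviation "gp \<equiv> gpc g"
abbreviation "paths i \<equiv> {p. spath E (s i) (t i) p}"

definition f :: "real \<Rightarrow> ('i \<times> 'v list \<Rightarrow> real) \<Rightarrow> real" where "f c x = \<Phi> x + c * GG x"
definition M :: "real \<Rightarrow> ('i \<times> 'v list \<Rightarrow> real) set" where "M c = {x\<in>FF. \<forall>y\<in>FF. f c x \<le> f c y}"
definition K :: real where "K = (\<Sum>i\<in>I. d i)"

lemma finP: "finite PP" using finite_Paths finE finI by blast

lemma P_Sigma: "PP = Sigma I paths" by (auto simp: Paths_def)

lemma fin_paths: "finite (paths i)" if "i \<in> I"
proof -
  have "paths i \<subseteq> snd ` PP" using that by (force simp: Paths_def)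
  thus ?thesis using finP finite_subset by blast
qed

lemma sum_P: "(\<Sum>ip\<in>PP. h ip) = (\<Sum>i\<in>I. \<Sum>p\<in>paths i. h (i,p))"
  unfolding P_Sigma by (subst sum.Sigma) (auto simp: finI fin_paths)

lemma F_iff: "x \<in> FF \<longleftrightarrow> x \<in> RR \<and> (\<forall>ip\<in>PP. 0 \<le> x ip) \<and> (\<forall>i\<in>I. (\<Sum>p\<in>paths i. x (i,p)) = d i)"
  by (simp add: flows_def)

lemma F_RP: "x \<in> FF \<Longrightarrow> x \<in> RR" by (simp add: F_iff)
lemma F_nonneg: "x \<in> FF \<Longrightarrow> ip \<in> PP \<Longrightarrow> 0 \<le> x ip" by (simp add: F_iff)
lemma F_sum: "x \<in> FF \<Longrightarrow> i \<in> I \<Longrightarrow> (\<Sum>p\<in>paths i. x (i,p)) = d i" by (simp add: F_iff)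

lemma F_le: assumes x: "x \<in> FF" and ip: "ip \<in> PP" shows "x ip \<le> K"
proof -
  obtain i p where ipd: "ip = (i,p)" "i \<in> I" "p \<in> paths i" using ip by (auto simp: P_Sigma)
  have "x (i,p) \<le> (\<Sum>p'\<in>paths i. x (i,p'))"
    using ipd F_nonneg[OF x] by (intro member_le_sum) (auto simp: fin_paths P_Sigma)
  also have "\<dots> = d i" using F_sum[OF x ipd(2)] .
  also have "\<dots> \<le> K" unfolding K_def using dpos ipd(2)
    by (intro member_le_sum) (auto simp: finI less_imp_le)
  finally show ?thesis using ipd by simp
qed

lemma G_lin: "GG x = (\<Sum>ip\<in>PP. gp ip * x ip)"
proof -
  have "GG x = (\<Sum>e\<in>E. \<Sum>ip\<in>PP. if e \<in> pedges (snd ip) then g e * x ip else 0)"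
    unfolding Gtot_def edge_flow_def by (auto simp: sum_distrib_left intro!: sum.cong)
  also have "\<dots> = (\<Sum>ip\<in>PP. \<Sum>e\<in>E. if e \<in> pedges (snd ip) then g e * x ip else 0)"
    by (rule sum.swap)
  also have "\<dots> = (\<Sum>ip\<in>PP. gp ip * x ip)"
  proof (rule sum.cong[OF refl])
    fix ip assume "ip \<in> PP"
    hence sub: "pedges (snd ip) \<subseteq> E" by (auto simp: Paths_def spath_def)
    have "(\<Sum>e\<in>E. if e \<in> pedges (snd ip) then g e * x ip else 0)
        = (\<Sum>e\<in>{e\<in>E. e \<in> pedges (snd ip)}. g e * x ip)"
      by (simp add: sum.inter_filter finE)
    also have "{e\<in>E. e \<in> pedges (snd ip)} = pedges (snd ip)" using sub by auto
    finally show "(\<Sum>e\<in>E. if e \<in> pedges (snd ip) then g e * x ip else 0) = gp ip * x ip"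
      by (simp add: gpc_def sum_distrib_right)
  qed
  finally show ?thesis .
qed

lemma cost_eq: "cost \<tau> g c ip x = \<tau> ip x + c * gp ip"
  by (simp add: cost_def gpc_def)

lemma normP_scale: "normP PP (\<lambda>ip. u * h ip) = \<bar>u\<bar> * normP PP h"
  unfolding normP_def
  by (simp add: power_mult_distrib sum_distrib_left[symmetric] real_sqrt_mult)

lemma grad_ineq:
  assumes x: "x \<in> RR" and y: "y \<in> RR" and D: "has_gradient_at E I s t \<Phi> x D"
  shows "(\<Sum>ip\<in>PP. D ip * (y ip - x ip)) \<le> \<Phi> y - \<Phi> x"
proof (rule field_le_epsilon)
  fix e :: real assume e: "0 < e"
  define h where "h = (\<lambda>ip. y ip - x ip)"
  define N where "N = normP PP h"
  have N0: "N \<ge> 0" by (simp add: N_def normP_def sum_nonneg)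
  define S where "S = (\<Sum>ip\<in>PP. D ip * h ip)"
  have ep: "e / (N+1) > 0" using e N0 by simp
  obtain \<delta> where \<delta>: "\<delta> > 0" and h\<delta>: "\<forall>h\<in>RR. normP PP h < \<delta> \<longrightarrow>
     \<bar>\<Phi> (\<lambda>ip. x ip + h ip) - \<Phi> x - (\<Sum>ip\<in>PP. D ip * h ip)\<bar> \<le> e/(N+1) * normP PP h"
    using D ep unfolding has_gradient_at_def by blast
  define u where "u = min 1 (\<delta> / (2*(N+1)))"
  have u0: "0 < u" "u \<le> 1" using \<delta> N0 by (auto simp: u_def)
  have uN: "u * N < \<delta>"
  proof -
    have "u * N \<le> \<delta>/(2*(N+1)) * N" using N0 by (intro mult_right_mono) (auto simp: u_def)
    also have "\<dots> < \<delta>"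
    proof -
      have nd: "N*\<delta> \<ge> 0" using \<delta> N0 by simp
      show ?thesis using \<delta> N0 by (simp add: field_simps) (use nd in linarith)
    qed
    finally show ?thesis .
  qed
  have hu: "(\<lambda>ip. u * h ip) \<in> RR" using x y by (simp add: RP_def h_def)
  have nu: "normP PP (\<lambda>ip. u * h ip) = u * N" using u0 by (simp add: normP_scale N_def)
  have 1: "\<bar>\<Phi> (\<lambda>ip. x ip + u * h ip) - \<Phi> x - (\<Sum>ip\<in>PP. D ip * (u * h ip))\<bar> \<le> e/(N+1) * (u*N)"
    using h\<delta>[rule_format, OF hu] nu uN by simp
  have 2: "(\<Sum>ip\<in>PP. D ip * (u * h ip)) = u * S" by (simp add: S_def sum_distrib_left algebra_simps)
  have 3: "(\<lambda>ip. x ip + u * h ip) = (\<lambda>ip. (1 - u) * x ip + u * y ip)" by (auto simp: h_def algebra_simps)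
  have 4: "\<Phi> (\<lambda>ip. (1 - u) * x ip + u * y ip) \<le> (1 - u) * \<Phi> x + u * \<Phi> y" using cvx x y u0 by auto
  have 5: "(1-u)*\<Phi> x + u*\<Phi> y - \<Phi> x = u*(\<Phi> y - \<Phi> x)" by (simp add: algebra_simps)
  have "u * S \<le> u * (\<Phi> y - \<Phi> x) + e/(N+1)*(u*N)" using 1 2 3 4 5 by (simp add: abs_le_iff)
  hence "u * S \<le> u * (\<Phi> y - \<Phi> x + e/(N+1)*N)" by (simp add: algebra_simps)
  hence "S \<le> \<Phi> y - \<Phi> x + e/(N+1)*N" using u0 by simp
  moreover have "e/(N+1)*N \<le> e" using e N0 by (simp add: field_simps)
  ultimately show "(\<Sum>ip\<in>PP. D ip * (y ip - x ip)) \<le> \<Phi> y - \<Phi> x + e" by (simp add: S_def h_def)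
qed

lemma lsc:
  assumes xs: "\<forall>n. xs n \<in> RR" and x: "x \<in> RR" and conv: "\<forall>ip\<in>PP. (\<lambda>n. xs n ip) \<longlonglongrightarrow> x ip"
    and le: "\<forall>n. \<Phi> (xs n) \<le> a n" and a: "a \<longlonglongrightarrow> \<alpha>"
  shows "\<Phi> x \<le> \<alpha>"
proof -
  obtain D where D: "has_gradient_at E I s t \<Phi> x D" using grad x by blast
  have le2: "\<Phi> x \<le> a n - (\<Sum>ip\<in>PP. D ip * (xs n ip - x ip))" for n
    using grad_ineq[OF x xs[rule_format] D, of n] le[rule_format, of n] by linarith
  have "(\<lambda>n. a n - (\<Sum>ip\<in>PP. D ip * (xs n ip - x ip))) \<longlonglongrightarrow> \<alpha> - (\<Sum>ip\<in>PP. D ip * (x ip - x ip))"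
    by (intro tendsto_diff a tendsto_sum tendsto_mult tendsto_const) (use conv in auto)
  hence "(\<lambda>n. a n - (\<Sum>ip\<in>PP. D ip * (xs n ip - x ip))) \<longlonglongrightarrow> \<alpha>" by simp
  then show ?thesis using le2 by (intro LIMSEQ_le_const) auto
qed

lemma G_tendsto: fixes xs :: "nat \<Rightarrow> 'i \<times> 'v list \<Rightarrow> real" shows "\<forall>ip\<in>PP. (\<lambda>n. xs n ip) \<longlonglongrightarrow> x ip \<Longrightarrow> (\<lambda>n. GG (xs n)) \<longlonglongrightarrow> GG x"
  unfolding G_lin by (intro tendsto_sum tendsto_mult tendsto_const) auto

lemma seq_compact:
  fixes xs :: "nat \<Rightarrow> 'i \<times> 'v list \<Rightarrow> real"
  assumes xs: "\<forall>n. xs n \<in> FF"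
  shows "\<exists>l\<in>FF. \<exists>r. strict_mono r \<and> (\<forall>ip\<in>PP. (\<lambda>n. xs (r n) ip) \<longlonglongrightarrow> l ip)"
proof -
  have bnd: "bounded ((\<lambda>x. x k) ` range xs)" if "k \<in> PP" for k
    unfolding bounded_real using F_le[OF _ that] F_nonneg[OF _ that] xs
    by (intro exI[of _ K]) force
  have "\<forall>\<delta>\<subseteq>PP. \<exists>l r. strict_mono r \<and> (\<forall>\<epsilon>>0. eventually (\<lambda>n. \<forall>i\<in>\<delta>. dist (xs (r n) i) (l i) < \<epsilon>) sequentially)"
    using compact_lemma_general[where f=xs and proj="\<lambda>x k. x k" and unproj="\<lambda>x. x" and basis=PP] finP bnd
    by auto
  then obtain l r where r: "strict_mono r"
    and conv: "\<forall>\<epsilon>>0. eventually (\<lambda>n. \<forall>i\<in>PP. dist (xs (r n) i) (l i) < \<epsilon>) sequentially"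
    by blast
  have c: "(\<lambda>n. xs (r n) ip) \<longlonglongrightarrow> l ip" if "ip \<in> PP" for ip
    unfolding tendsto_iff
  proof (intro allI impI)
    fix e :: real assume "e > 0"
    hence "eventually (\<lambda>n. \<forall>i\<in>PP. dist (xs (r n) i) (l i) < e) sequentially" using conv by blast
    thus "eventually (\<lambda>n. dist (xs (r n) ip) (l ip) < e) sequentially"
      by (rule eventually_mono) (use that in blast)
  qed
  define l' where "l' = (\<lambda>ip. if ip \<in> PP then l ip else 0)"
  have c': "\<forall>ip\<in>PP. (\<lambda>n. xs (r n) ip) \<longlonglongrightarrow> l' ip" using c by (simp add: l'_def)
  have "l' \<in> FF"
    unfolding F_iff
  proof (intro conjI ballI)
    show "l' \<in> RR" by (simp add: RP_def l'_def)
  next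
    fix ip assume ip: "ip \<in> PP"
    show "0 \<le> l' ip" using c'[rule_format, OF ip] F_nonneg[OF xs[rule_format] ip]
      by (intro LIMSEQ_le_const) auto
  next
    fix i assume i: "i \<in> I"
    have "(\<lambda>n. \<Sum>p\<in>paths i. xs (r n) (i,p)) \<longlonglongrightarrow> (\<Sum>p\<in>paths i. l' (i,p))"
      using c' i by (intro tendsto_sum) (auto simp: P_Sigma)
    moreover have "(\<lambda>n. \<Sum>p\<in>paths i. xs (r n) (i,p)) = (\<lambda>n. d i)"
      using F_sum[OF xs[rule_format] i] by simp
    ultimately show "(\<Sum>p\<in>paths i. l' (i,p)) = d i"
      using LIMSEQ_unique tendsto_const by metis
  qed
  thus ?thesis using r c' by blast
qed


lemma F_ne: "FF \<noteq> {}" using feas by (auto simp: feasible_scheme_def)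

lemma Phi_lb: "\<exists>lb. \<forall>y\<in>FF. lb \<le> \<Phi> y"
proof -
  obtain x0 where x0F: "x0 \<in> FF" using F_ne by blast
  obtain D0 where D0: "has_gradient_at E I s t \<Phi> x0 D0" using grad F_RP[OF x0F] by blast
  have "\<Phi> x0 - (\<Sum>ip\<in>PP. \<bar>D0 ip\<bar> * (K + \<bar>x0 ip\<bar>)) \<le> \<Phi> y" if y: "y \<in> FF" for y
  proof -
    have 1: "\<Phi> x0 + (\<Sum>ip\<in>PP. D0 ip * (y ip - x0 ip)) \<le> \<Phi> y"
      using grad_ineq[OF F_RP[OF x0F] F_RP[OF y] D0] by simp
    have 2: "-(\<Sum>ip\<in>PP. \<bar>D0 ip\<bar> * (K + \<bar>x0 ip\<bar>)) \<le> (\<Sum>ip\<in>PP. D0 ip * (y ip - x0 ip))"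
      unfolding sum_negf[symmetric]
    proof (rule sum_mono)
      fix ip assume ip: "ip \<in> PP"
      have "\<bar>y ip - x0 ip\<bar> \<le> K + \<bar>x0 ip\<bar>" using F_nonneg[OF y ip] F_le[OF y ip] by auto
      hence "\<bar>D0 ip * (y ip - x0 ip)\<bar> \<le> \<bar>D0 ip\<bar> * (K + \<bar>x0 ip\<bar>)"
        by (simp add: abs_mult mult_left_mono)
      thus "- (\<bar>D0 ip\<bar> * (K + \<bar>x0 ip\<bar>)) \<le> D0 ip * (y ip - x0 ip)" by linarith
    qed
    show ?thesis using 1 2 by linarith
  qed
  thus ?thesis by blast
qed

lemma G_bnd: "\<exists>kb. \<forall>y\<in>FF. \<bar>GG y\<bar> \<le> kb"
proof -
  have "\<bar>GG y\<bar> \<le> (\<Sum>ip\<in>PP. \<bar>gp ip\<bar> * K)" if y: "y \<in> FF" for y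
  proof -
    have "\<bar>GG y\<bar> \<le> (\<Sum>ip\<in>PP. \<bar>gp ip * y ip\<bar>)" unfolding G_lin by (rule sum_abs)
    also have "\<dots> \<le> (\<Sum>ip\<in>PP. \<bar>gp ip\<bar> * K)"
    proof (rule sum_mono)
      fix ip assume ip: "ip \<in> PP"
      show "\<bar>gp ip * y ip\<bar> \<le> \<bar>gp ip\<bar> * K" using F_nonneg[OF y ip] F_le[OF y ip]
        by (simp add: abs_mult mult_left_mono)
    qed
    finally show ?thesis .
  qed
  thus ?thesis by blast
qed

lemma exists_min:
  assumes S: "S \<subseteq> FF" "S \<noteq> {}"
    and Scl: "\<And>xs l r. (\<forall>n::nat. xs n \<in> S) \<Longrightarrow> l \<in> FF \<Longrightarrow> strict_mono r \<Longrightarrow>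
               (\<forall>ip\<in>PP. (\<lambda>n. xs (r n) ip) \<longlonglongrightarrow> l ip) \<Longrightarrow> l \<in> S"
  shows "\<exists>x\<in>S. \<forall>y\<in>S. f c x \<le> f c y"
proof -
  obtain lb where lb: "\<forall>y\<in>FF. lb \<le> \<Phi> y" using Phi_lb by blast
  obtain kb where kb: "\<forall>y\<in>FF. \<bar>GG y\<bar> \<le> kb" using G_bnd by blast
  have lbf: "lb - \<bar>c\<bar> * kb \<le> f c y" if "y \<in> S" for y
  proof -
    have yF: "y \<in> FF" using that S by auto
    have h2: "\<bar>c * GG y\<bar> \<le> \<bar>c\<bar> * kb" using kb yF by (simp add: abs_mult mult_left_mono)
    have h1: "lb \<le> \<Phi> y" using lb yF by blast
    show ?thesis using h1 h2 unfolding f_def abs_le_iff by linarith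
  qed
  have bdd: "bdd_below (f c ` S)" using lbf by (intro bdd_belowI[of _ "lb - \<bar>c\<bar> * kb"]) auto
  define m where "m = Inf (f c ` S)"
  have "\<forall>n. \<exists>y. y \<in> S \<and> f c y < m + inverse (real (Suc n))"
  proof
    fix n
    have "Inf (f c ` S) < m + inverse (real (Suc n))" by (simp add: m_def)
    then obtain z where "z \<in> f c ` S" "z < m + inverse (real (Suc n))"
      using cInf_lessD[of "f c ` S"] S(2) by blast
    thus "\<exists>y. y \<in> S \<and> f c y < m + inverse (real (Suc n))" by blast
  qed
  from choice[OF this] obtain ys where ys: "\<forall>n. ys n \<in> S \<and> f c (ys n) < m + inverse (real (Suc n))"
    by blast
  have ysF: "\<forall>n. ys n \<in> FF" using ys S(1) by blast
  obtain l r where l: "l \<in> FF" "strict_mono r" "\<forall>ip\<in>PP. (\<lambda>n. ys (r n) ip) \<longlonglongrightarrow> l ip"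
    using seq_compact[OF ysF] by blast
  have lS: "l \<in> S" using Scl[of ys l r] ys l by blast
  have inv0: "(\<lambda>n. inverse (real (Suc (r n)))) \<longlonglongrightarrow> 0"
    using LIMSEQ_subseq_LIMSEQ[OF LIMSEQ_inverse_real_of_nat l(2)] by (simp add: o_def)
  have "\<Phi> l \<le> m + 0 - c * GG l"
  proof (rule lsc[where xs="\<lambda>n. ys (r n)" and a="\<lambda>n. m + inverse (real (Suc (r n))) - c * GG (ys (r n))"])
    show "\<forall>n. ys (r n) \<in> RR" using ysF F_RP by blast
    show "l \<in> RR" using l F_RP by blast
    show "\<forall>ip\<in>PP. (\<lambda>n. ys (r n) ip) \<longlonglongrightarrow> l ip" using l by blast
    show "\<forall>n. \<Phi> (ys (r n)) \<le> m + inverse (real (Suc (r n))) - c * GG (ys (r n))"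
    proof
      fix n
      have "f c (ys (r n)) < m + inverse (real (Suc (r n)))" using ys by blast
      thus "\<Phi> (ys (r n)) \<le> m + inverse (real (Suc (r n))) - c * GG (ys (r n))"
        unfolding f_def by linarith
    qed
    show "(\<lambda>n. m + inverse (real (Suc (r n))) - c * GG (ys (r n))) \<longlonglongrightarrow> m + 0 - c * GG l"
      by (intro tendsto_intros inv0 G_tendsto) (use l in blast)
  qed
  hence "f c l \<le> m" by (simp add: f_def)
  moreover have "m \<le> f c y" if "y \<in> S" for y
    unfolding m_def using bdd that by (intro cInf_lower) auto
  ultimately show ?thesis using lS by force
qed

lemma VI:
  assumes x: "x \<in> WE E I s t d \<tau> g c" and y: "y \<in> FF"
  shows "0 \<le> (\<Sum>ip\<in>PP. cost \<tau> g c ip x * (y ip - x ip))"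
proof -
  have xF: "x \<in> FF" and xw: "\<forall>i p. (i,p) \<in> PP \<and> x (i,p) > 0 \<longrightarrow>
      (\<forall>q. spath E (s i) (t i) q \<longrightarrow> cost \<tau> g c (i,p) x \<le> cost \<tau> g c (i,q) x)"
    using x by (auto simp: WE_def)
  define C where "C ip = cost \<tau> g c ip x" for ip
  have "(\<Sum>ip\<in>PP. C ip * (y ip - x ip)) = (\<Sum>i\<in>I. \<Sum>p\<in>paths i. C (i,p) * (y (i,p) - x (i,p)))"
    by (rule sum_P)
  also have "\<dots> \<ge> 0"
  proof (rule sum_nonneg)
    fix i assume i: "i \<in> I"
    have pos_ex: "\<exists>p0\<in>paths i. x (i,p0) > 0"
    proof (rule ccontr)
      assume "\<not> ?thesis"
      hence "(\<Sum>p\<in>paths i. x (i,p)) \<le> 0" by (intro sum_nonpos) auto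
      thus False using F_sum[OF xF i] dpos i by auto
    qed
    then obtain p0 where p0: "p0 \<in> paths i" "x (i,p0) > 0" by blast
    define m where "m = C (i,p0)"
    have ge: "m \<le> C (i,p)" if "p \<in> paths i" for p
      using xw p0 i that by (auto simp: m_def C_def P_Sigma)
    have eqx: "C (i,p) * x (i,p) = m * x (i,p)" if "p \<in> paths i" for p
    proof (cases "x (i,p) > 0")
      case True
      hence "C (i,p) \<le> m" using xw i that p0 by (auto simp: m_def C_def P_Sigma)
      thus ?thesis using ge[OF that] by simp
    next
      case False
      hence "x (i,p) = 0" using F_nonneg[OF xF, of "(i,p)"] i that by (auto simp: P_Sigma)
      thus ?thesis by simp
    qed
    have gey: "m * y (i,p) \<le> C (i,p) * y (i,p)" if "p \<in> paths i" for p
      using ge[OF that] F_nonneg[OF y, of "(i,p)"] i that by (auto simp: P_Sigma intro: mult_right_mono)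
    have "(\<Sum>p\<in>paths i. C (i,p) * (y (i,p) - x (i,p)))
        = (\<Sum>p\<in>paths i. C (i,p) * y (i,p)) - (\<Sum>p\<in>paths i. m * x (i,p))"
    proof -
      have e: "(\<Sum>p\<in>paths i. C (i,p) * x (i,p)) = (\<Sum>p\<in>paths i. m * x (i,p))"
        using eqx by (intro sum.cong) auto
      show ?thesis by (simp add: right_diff_distrib sum_subtractf e)
    qed
    also have "\<dots> \<ge> (\<Sum>p\<in>paths i. m * y (i,p)) - (\<Sum>p\<in>paths i. m * x (i,p))"
      using sum_mono[of "paths i" "\<lambda>p. m * y (i,p)" "\<lambda>p. C (i,p) * y (i,p)"] gey by simp
    moreover have "(\<Sum>p\<in>paths i. m * y (i,p)) - (\<Sum>p\<in>paths i. m * x (i,p)) = 0"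
      using F_sum[OF y i] F_sum[OF xF i] by (simp add: sum_distrib_left[symmetric])
    ultimately show "0 \<le> (\<Sum>p\<in>paths i. C (i,p) * (y (i,p) - x (i,p)))" by linarith
  qed
  finally show ?thesis by (simp add: C_def)
qed

lemma WE_sub_M: assumes x: "x \<in> WE E I s t d \<tau> g c" shows "x \<in> M c"
proof -
  have xF: "x \<in> FF" using x by (simp add: WE_def)
  have "f c x \<le> f c y" if y: "y \<in> FF" for y
  proof -
    have 1: "(\<Sum>ip\<in>PP. \<tau> ip x * (y ip - x ip)) \<le> \<Phi> y - \<Phi> x"
      using grad_ineq[OF F_RP[OF xF] F_RP[OF y]] gradtau xF by blast
    have 2: "(\<Sum>ip\<in>PP. cost \<tau> g c ip x * (y ip - x ip))
        = (\<Sum>ip\<in>PP. \<tau> ip x * (y ip - x ip)) + (c * GG y - c * GG x)"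
      by (simp add: cost_eq G_lin distrib_right sum.distrib sum_distrib_left
          right_diff_distrib sum_subtractf algebra_simps)
    show ?thesis using VI[OF x y] 1 2 by (simp add: f_def)
  qed
  thus ?thesis using xF by (simp add: M_def)
qed

lemma shift_F:
  assumes x: "x \<in> FF" and a: "a \<in> PP" and b: "b \<in> PP" and ab: "a \<noteq> b" "fst a = fst b"
    and u: "0 \<le> u" "u \<le> x a"
  shows "shift x a b u \<in> FF"
  unfolding F_iff
proof (intro conjI ballI)
  show "shift x a b u \<in> RR" using F_RP[OF x] a b by (auto simp: RP_def shift_def)
next
  fix ip assume ip: "ip \<in> PP"
  show "0 \<le> shift x a b u ip" using F_nonneg[OF x ip] u ab by (auto simp: shift_def)
next
  fix i assume i: "i \<in> I"
  obtain j p where a': "a = (j,p)" "j \<in> I" "p \<in> paths j" using a by (auto simp: P_Sigma)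
  obtain q where b': "b = (j,q)" "q \<in> paths j" using b ab a' by (cases b) (auto simp: P_Sigma)
  have "(\<Sum>p'\<in>paths i. shift x a b u (i,p')) = (\<Sum>p'\<in>paths i. x (i,p'))
      + (\<Sum>p'\<in>paths i. if (i,p') = b then u else 0) - (\<Sum>p'\<in>paths i. if (i,p') = a then u else 0)"
    by (simp add: shift_def sum.distrib sum_subtractf)
  also have "(\<Sum>p'\<in>paths i. if (i,p') = b then u else 0) = (\<Sum>p'\<in>paths i. if (i,p') = a then u else 0)"
  proof (cases "i = j")
    case True
    thus ?thesis using a' b' fin_paths[OF a'(2)] by (simp add: sum.delta)
  next
    case False
    thus ?thesis using a' b' by simp
  qed
  finally show "(\<Sum>p'\<in>paths i. shift x a b u (i,p')) = d i" using F_sum[OF x i] by simp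
qed

lemma G_shift:
  assumes a: "a \<in> PP" and b: "b \<in> PP"
  shows "GG (shift x a b u) = GG x + u * (gp b - gp a)"
  unfolding G_lin shift_def
  using a b finP by (simp add: algebra_simps sum.distrib sum_subtractf if_distrib[of "\<lambda>z. gp _ * z"]
      cong: if_cong)


lemma first_order:
  assumes x: "x \<in> FF" and a: "a \<in> PP" and b: "b \<in> PP" and ab: "a \<noteq> b"
    and \<eta>: "\<eta> > 0" and opt: "\<forall>u. 0 < u \<and> u \<le> \<eta> \<longrightarrow> f c x \<le> f c (shift x a b u)"
  shows "\<tau> a x + c * gp a \<le> \<tau> b x + c * gp b"
proof (rule ccontr)
  assume nt: "\<not> ?thesis"
  define \<Delta> where "\<Delta> = (\<tau> a x + c * gp a) - (\<tau> b x + c * gp b)"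
  have \<Delta>: "\<Delta> > 0" using nt by (simp add: \<Delta>_def)
  have \<Delta>4: "\<Delta>/4 > 0" using \<Delta> by simp
  obtain \<delta> where \<delta>: "\<delta> > 0" and h\<delta>: "\<forall>h\<in>RR. normP PP h < \<delta> \<longrightarrow>
     \<bar>\<Phi> (\<lambda>ip. x ip + h ip) - \<Phi> x - (\<Sum>ip\<in>PP. \<tau> ip x * h ip)\<bar> \<le> \<Delta>/4 * normP PP h"
    using gradtau[rule_format, OF x] \<Delta>4 unfolding has_gradient_at_def by blast
  define u where "u = min \<eta> (\<delta>/4)"
  have u: "0 < u" "u \<le> \<eta>" "2*u < \<delta>" using \<eta> \<delta> by (auto simp: u_def)
  define h where "h = (\<lambda>ip. (if ip = b then u else 0) - (if ip = a then u else 0))"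
  have hR: "h \<in> RR" using a b by (auto simp: RP_def h_def)
  have sq: "(h ip)^2 = (if ip = b then u^2 else 0) + (if ip = a then u^2 else 0)" for ip
    using ab by (auto simp: h_def)
  have "(\<Sum>ip\<in>PP. (h ip)^2) = 2 * u^2" unfolding sq using a b finP by (simp add: sum.distrib)
  hence nh: "normP PP h = sqrt 2 * u" using u by (simp add: normP_def real_sqrt_mult)
  have nh2: "normP PP h \<le> 2 * u" unfolding nh using sqrt2_less_2 u by simp
  have xh: "(\<lambda>ip. x ip + h ip) = shift x a b u" by (auto simp: shift_def h_def)
  have sh: "(\<Sum>ip\<in>PP. \<tau> ip x * h ip) = u * \<tau> b x - u * \<tau> a x"
    unfolding h_def using a b finP
    by (simp add: algebra_simps sum.distrib sum_subtractf if_distrib[of "\<lambda>z. \<tau> _ x * z"] cong: if_cong)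
  have "\<bar>\<Phi> (shift x a b u) - \<Phi> x - (u * \<tau> b x - u * \<tau> a x)\<bar> \<le> \<Delta>/4 * normP PP h"
    using h\<delta>[rule_format, OF hR] nh2 u xh sh by simp
  moreover have "\<Delta>/4 * normP PP h \<le> \<Delta>/4 * (2*u)" using nh2 \<Delta>4 by (intro mult_left_mono) auto
  ultimately have 1: "\<Phi> (shift x a b u) - \<Phi> x \<le> u * \<tau> b x - u * \<tau> a x + \<Delta>/4 * (2*u)"
    unfolding abs_le_iff by linarith
  have 2: "f c (shift x a b u) - f c x = (\<Phi> (shift x a b u) - \<Phi> x) + c*(u*(gp b - gp a))"
    by (simp add: f_def G_shift[OF a b] algebra_simps)
  have 3: "f c x \<le> f c (shift x a b u)" using opt u by auto
  have 4: "u * \<tau> b x - u * \<tau> a x + c*(u*(gp b - gp a)) = - (u * \<Delta>)" by (simp add: \<Delta>_def algebra_simps)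
  have 5: "u * \<Delta> > 0" using u \<Delta> by simp
  have 6: "\<Delta>/4 * (2*u) = (u*\<Delta>)/2" by simp
  show False using 1 2 3 4 5 6 by linarith
qed

lemma M_sub_WE: assumes x: "x \<in> M c" shows "x \<in> WE E I s t d \<tau> g c"
proof -
  have xF: "x \<in> FF" and opt: "\<forall>y\<in>FF. f c x \<le> f c y" using x by (auto simp: M_def)
  have "cost \<tau> g c (i,p) x \<le> cost \<tau> g c (i,q) x"
    if ip: "(i,p) \<in> PP" "x (i,p) > 0" and q: "spath E (s i) (t i) q" for i p q
  proof (cases "p = q")
    case True thus ?thesis by simp
  next
    case False
    have b: "(i,q) \<in> PP" using ip q by (auto simp: Paths_def)
    have "\<tau> (i,p) x + c * gp (i,p) \<le> \<tau> (i,q) x + c * gp (i,q)"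
    proof (rule first_order[OF xF ip(1) b _ ip(2)])
      show "(i,p) \<noteq> (i,q)" using False by simp
      show "\<forall>u. 0 < u \<and> u \<le> x (i,p) \<longrightarrow> f c x \<le> f c (shift x (i,p) (i,q) u)"
      proof (intro allI impI)
        fix u assume u: "0 < u \<and> u \<le> x (i,p)"
        have "shift x (i,p) (i,q) u \<in> FF" using shift_F[OF xF ip(1) b] u False by auto
        thus "f c x \<le> f c (shift x (i,p) (i,q) u)" using opt by blast
      qed
    qed
    thus ?thesis by (simp add: cost_eq)
  qed
  thus ?thesis using xF by (auto simp: WE_def)
qed

lemma WE_eq_M: "WE E I s t d \<tau> g c = M c" using WE_sub_M M_sub_WE by blast

lemma G_comb: "GG (\<lambda>ip. (1-u)*x ip + u*y ip) = (1-u)*GG x + u*GG y"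
  unfolding G_lin
proof -
  have "(\<Sum>ip\<in>PP. gp ip * ((1-u)*x ip + u*y ip)) = (\<Sum>ip\<in>PP. (1-u)*(gp ip * x ip) + u*(gp ip * y ip))"
    by (intro sum.cong) (auto simp: algebra_simps)
  also have "\<dots> = (1-u)*(\<Sum>ip\<in>PP. gp ip * x ip) + u*(\<Sum>ip\<in>PP. gp ip * y ip)"
    by (simp add: sum.distrib sum_distrib_left)
  finally show "(\<Sum>ip\<in>PP. gp ip * ((1-u)*x ip + u*y ip)) = (1-u)*(\<Sum>ip\<in>PP. gp ip * x ip) + u*(\<Sum>ip\<in>PP. gp ip * y ip)" .
qed

lemma F_comb:
  assumes x: "x \<in> FF" and y: "y \<in> FF" and u: "0 \<le> u" "u \<le> 1"
  shows "(\<lambda>ip. (1-u)*x ip + u*y ip) \<in> FF"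
  unfolding F_iff
proof (intro conjI ballI)
  show "(\<lambda>ip. (1-u)*x ip + u*y ip) \<in> RR" using F_RP[OF x] F_RP[OF y] by (auto simp: RP_def)
next
  fix ip assume ip: "ip \<in> PP"
  show "0 \<le> (1-u)*x ip + u*y ip" using F_nonneg[OF x ip] F_nonneg[OF y ip] u by simp
next
  fix i assume i: "i \<in> I"
  have "(\<Sum>p\<in>paths i. (1-u)*x (i,p) + u*y (i,p)) = (1-u)*(\<Sum>p\<in>paths i. x (i,p)) + u*(\<Sum>p\<in>paths i. y (i,p))"
    by (simp add: sum.distrib sum_distrib_left)
  also have "\<dots> = d i" using F_sum[OF x i] F_sum[OF y i] by (simp add: algebra_simps)
  finally show "(\<Sum>p\<in>paths i. (1-u)*x (i,p) + u*y (i,p)) = d i" .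
qed

lemma M_comb:
  assumes x: "x \<in> M c" and y: "y \<in> M c" and u: "0 \<le> u" "u \<le> 1"
  shows "(\<lambda>ip. (1-u)*x ip + u*y ip) \<in> M c"
proof -
  have xF: "x \<in> FF" and yF: "y \<in> FF" using x y by (auto simp: M_def)
  have zF: "(\<lambda>ip. (1-u)*x ip + u*y ip) \<in> FF" by (rule F_comb[OF xF yF u])
  have "f c (\<lambda>ip. (1-u)*x ip + u*y ip) \<le> f c z" if z: "z \<in> FF" for z
  proof -
    have 1: "\<Phi> (\<lambda>ip. (1-u)*x ip + u*y ip) \<le> (1-u)*\<Phi> x + u*\<Phi> y"
      using cvx F_RP[OF xF] F_RP[OF yF] u by blast
    have 2: "(1-u) * f c x \<le> (1-u) * f c z" using x z u by (intro mult_left_mono) (auto simp: M_def)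
    have 3: "u * f c y \<le> u * f c z" using y z u by (intro mult_left_mono) (auto simp: M_def)
    have 4: "f c (\<lambda>ip. (1-u)*x ip + u*y ip) - ((1-u) * f c x + u * f c y)
         = \<Phi> (\<lambda>ip. (1-u)*x ip + u*y ip) - ((1-u)*\<Phi> x + u*\<Phi> y)"
      unfolding f_def G_comb by (simp add: algebra_simps)
    have 5: "(1-u) * f c z + u * f c z = f c z" by (simp add: algebra_simps)
    show ?thesis using 1 2 3 4 5 by linarith
  qed
  thus ?thesis using zF by (simp add: M_def)
qed

lemma M_ne: "M c \<noteq> {}"
  using exists_min[of FF c] F_ne by (auto simp: M_def)

lemma M_mono:
  assumes c: "c1 < c2" and x1: "x1 \<in> M c1" and x2: "x2 \<in> M c2"
  shows "GG x2 \<le> GG x1"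
proof -
  have 1: "f c1 x1 \<le> f c1 x2" using x1 x2 by (auto simp: M_def)
  have 2: "f c2 x2 \<le> f c2 x1" using x1 x2 by (auto simp: M_def)
  have e: "(c2 - c1) * (GG x2 - GG x1) = (c2*GG x2 + c1*GG x1) - (c1*GG x2 + c2*GG x1)"
    by (simp add: algebra_simps)
  have "(c2 - c1) * (GG x2 - GG x1) \<le> 0" using 1 2 e unfolding f_def by linarith
  thus ?thesis using c by (simp add: mult_le_0_iff)
qed

lemma M_closed:
  fixes xs :: "nat \<Rightarrow> 'i \<times> 'v list \<Rightarrow> real" and lams :: "nat \<Rightarrow> real"
  assumes lams: "lams \<longlonglongrightarrow> lam" and xs: "\<forall>n. xs n \<in> M (lams n)"
  shows "\<exists>x\<in>M lam. \<exists>r. strict_mono r \<and> (\<lambda>n. GG (xs (r n))) \<longlonglongrightarrow> GG x"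
proof -
  have xsF: "\<forall>n. xs n \<in> FF" using xs by (auto simp: M_def)
  obtain l r where l: "l \<in> FF" "strict_mono r" "\<forall>ip\<in>PP. (\<lambda>n. xs (r n) ip) \<longlonglongrightarrow> l ip"
    using seq_compact[OF xsF] by blast
  have lr: "(\<lambda>n. lams (r n)) \<longlonglongrightarrow> lam" using LIMSEQ_subseq_LIMSEQ[OF lams l(2)] by (simp add: o_def)
  have Gl: "(\<lambda>n. GG (xs (r n))) \<longlonglongrightarrow> GG l" by (rule G_tendsto[OF l(3)])
  have "f lam l \<le> f lam y" if y: "y \<in> FF" for y
  proof -
    have "\<Phi> l \<le> \<Phi> y + lam * GG y - lam * GG l"
    proof (rule lsc[where xs="\<lambda>n. xs (r n)" and a="\<lambda>n. \<Phi> y + lams (r n) * GG y - lams (r n) * GG (xs (r n))"])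
      show "\<forall>n. xs (r n) \<in> RR" using xsF F_RP by blast
      show "l \<in> RR" using l F_RP by blast
      show "\<forall>ip\<in>PP. (\<lambda>n. xs (r n) ip) \<longlonglongrightarrow> l ip" using l by blast
      show "\<forall>n. \<Phi> (xs (r n)) \<le> \<Phi> y + lams (r n) * GG y - lams (r n) * GG (xs (r n))"
      proof
        fix n
        have "f (lams (r n)) (xs (r n)) \<le> f (lams (r n)) y" using xs y by (auto simp: M_def)
        thus "\<Phi> (xs (r n)) \<le> \<Phi> y + lams (r n) * GG y - lams (r n) * GG (xs (r n))"
          unfolding f_def by linarith
      qed
      show "(\<lambda>n. \<Phi> y + lams (r n) * GG y - lams (r n) * GG (xs (r n))) \<longlonglongrightarrow> \<Phi> y + lam * GG y - lam * GG l"
        by (intro tendsto_intros lr Gl)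
    qed
    thus ?thesis by (simp add: f_def)
  qed
  hence "l \<in> M lam" using l by (simp add: M_def)
  thus ?thesis using l(2) Gl by blast
qed


lemma L_ne: "\<exists>lam\<ge>0. \<exists>x\<in>M lam. GG x \<le> B"
proof (cases "\<exists>xs\<in>FF. GG xs < B")
  case True
  then obtain xs where xs: "xs \<in> FF" "GG xs < B" by blast
  obtain lb where lb: "\<forall>y\<in>FF. lb \<le> \<Phi> y" using Phi_lb by blast
  define lam where "lam = (\<bar>\<Phi> xs - lb\<bar> + 1) / (B - GG xs)"
  have lam0: "lam > 0" using xs unfolding lam_def by (intro divide_pos_pos) auto
  have lamB: "lam * (B - GG xs) = \<bar>\<Phi> xs - lb\<bar> + 1" using xs by (simp add: lam_def)
  obtain x where x: "x \<in> M lam" using M_ne by blast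
  have xF: "x \<in> FF" using x by (simp add: M_def)
  have "f lam x \<le> f lam xs" using x xs by (simp add: M_def)
  hence 1: "lam * (GG x - GG xs) \<le> \<Phi> xs - \<Phi> x" by (simp add: f_def algebra_simps)
  have 2: "\<Phi> x \<ge> lb" using lb xF by blast
  have "lam * (GG x - B) < 0"
  proof -
    have "lam * (GG x - B) = lam * (GG x - GG xs) - lam * (B - GG xs)" by (simp add: algebra_simps)
    thus ?thesis using 1 2 lamB abs_ge_self[of "\<Phi> xs - lb"] by linarith
  qed
  hence "GG x < B" using lam0 by (simp add: mult_less_0_iff)
  thus ?thesis using lam0 x less_imp_le by (intro exI[of _ lam]) blast
next
  case False
  hence geB: "\<forall>x\<in>FF. B \<le> GG x" by auto
  define S where "S = {x\<in>FF. GG x \<le> B}"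
  have S_ne: "S \<noteq> {}" using feas by (auto simp: feasible_scheme_def S_def)
  have "\<exists>x\<in>S. \<forall>y\<in>S. f 0 x \<le> f 0 y"
  proof (rule exists_min)
    show "S \<subseteq> FF" by (auto simp: S_def)
    show "S \<noteq> {}" by (rule S_ne)
    fix xs :: "nat \<Rightarrow> 'i \<times> 'v list \<Rightarrow> real" and l r
    assume h: "\<forall>n::nat. xs n \<in> S" "l \<in> FF" "strict_mono r" "\<forall>ip\<in>PP. (\<lambda>n. xs (r n) ip) \<longlonglongrightarrow> l ip"
    have "(\<lambda>n. GG (xs (r n))) \<longlonglongrightarrow> GG l" by (rule G_tendsto[OF h(4)])
    moreover have "\<forall>n. GG (xs (r n)) \<le> B" using h(1) by (auto simp: S_def)
    ultimately have "GG l \<le> B" by (intro LIMSEQ_le_const2) auto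
    thus "l \<in> S" using h(2) by (simp add: S_def)
  qed
  then obtain xb where xbS: "xb \<in> S" and opt: "\<forall>y\<in>S. \<Phi> xb \<le> \<Phi> y" by (auto simp: f_def)
  have xbF: "xb \<in> FF" and xbB: "GG xb \<le> B" using xbS by (auto simp: S_def)
  define Q where "Q = {ab \<in> PP \<times> PP. gp (fst ab) < gp (snd ab)}"
  define lam where "lam = (\<Sum>ab\<in>Q. \<bar>\<tau> (fst ab) xb - \<tau> (snd ab) xb\<bar> / (gp (snd ab) - gp (fst ab)))"
  have finQ: "finite Q" using finP by (simp add: Q_def)
  have lam0: "lam \<ge> 0" unfolding lam_def by (intro sum_nonneg) (auto simp: Q_def)
  have key: "\<tau> a xb + lam * gp a \<le> \<tau> b xb + lam * gp b"
    if a: "a \<in> PP" and b: "b \<in> PP" and ab: "a \<noteq> b" "fst a = fst b" and pos: "xb a > 0" for a b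
  proof -
    have sF: "shift xb a b u \<in> FF" if "0 \<le> u" "u \<le> xb a" for u
      using shift_F[OF xbF a b ab] that by blast
    have gs: "GG (shift xb a b u) = GG xb + u * (gp b - gp a)" for u by (rule G_shift[OF a b])
    have ge: "gp a \<le> gp b"
    proof (rule ccontr)
      assume "\<not> ?thesis"
      hence "xb a * (gp b - gp a) < 0" using pos by (simp add: mult_pos_neg)
      hence "GG (shift xb a b (xb a)) < B" using gs xbB by smt
      thus False using geB sF[of "xb a"] pos by force
    qed
    show ?thesis
    proof (cases "gp a = gp b")
      case True
      have "\<tau> a xb + 0 * gp a \<le> \<tau> b xb + 0 * gp b"
      proof (rule first_order[OF xbF a b ab(1) pos])
        show "\<forall>u. 0 < u \<and> u \<le> xb a \<longrightarrow> f 0 xb \<le> f 0 (shift xb a b u)"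
        proof (intro allI impI)
          fix u assume "0 < u \<and> u \<le> xb a"
          hence "shift xb a b u \<in> S" using sF gs True xbB by (auto simp: S_def)
          thus "f 0 xb \<le> f 0 (shift xb a b u)" using opt by (simp add: f_def)
        qed
      qed
      thus ?thesis using True by simp
    next
      case False
      hence lt: "gp a < gp b" using ge by simp
      have "(a,b) \<in> Q" using a b lt by (simp add: Q_def)
      have "(\<lambda>ab. \<bar>\<tau> (fst ab) xb - \<tau> (snd ab) xb\<bar> / (gp (snd ab) - gp (fst ab))) (a,b) \<le> lam"
        unfolding lam_def by (rule member_le_sum) (use \<open>(a,b) \<in> Q\<close> finQ in \<open>auto simp: Q_def\<close>)
      hence "\<bar>\<tau> a xb - \<tau> b xb\<bar> / (gp b - gp a) \<le> lam" by simp
      moreover have "(\<tau> a xb - \<tau> b xb) / (gp b - gp a) \<le> \<bar>\<tau> a xb - \<tau> b xb\<bar> / (gp b - gp a)"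
        using lt by (intro divide_right_mono) auto
      ultimately have "(\<tau> a xb - \<tau> b xb) / (gp b - gp a) \<le> lam" by linarith
      hence "\<tau> a xb - \<tau> b xb \<le> lam * (gp b - gp a)" using lt by (simp add: pos_divide_le_eq)
      thus ?thesis by (simp add: algebra_simps)
    qed
  qed
  have "cost \<tau> g lam (i,p) xb \<le> cost \<tau> g lam (i,q) xb"
    if ip: "(i,p) \<in> PP" "xb (i,p) > 0" and q: "spath E (s i) (t i) q" for i p q
  proof (cases "p = q")
    case True thus ?thesis by simp
  next
    case False
    have b: "(i,q) \<in> PP" using ip q by (auto simp: Paths_def)
    show ?thesis using key[OF ip(1) b _ _ ip(2)] False by (simp add: cost_eq)
  qed
  hence "xb \<in> WE E I s t d \<tau> g lam" using xbF by (auto simp: WE_def)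
  thus ?thesis using lam0 xbB WE_eq_M by blast
qed


lemma main:
  shows "\<exists>lo. lo \<in> {lam. lam \<ge> 0 \<and> (\<exists>x \<in> WE E I s t d \<tau> g lam. Gtot E I s t g x \<le> B)}
          \<and> (\<forall>lam \<in> {lam. lam \<ge> 0 \<and> (\<exists>x \<in> WE E I s t d \<tau> g lam. Gtot E I s t g x \<le> B)}. lo \<le> lam)
          \<and> (\<forall>lam \<ge> 0. market_eq_price E I s t d \<tau> B g lam \<longleftrightarrow>
               lo \<le> lam \<and> ereal lam \<le> Sup (ereal ` ({lam. lam \<ge> 0 \<and>
                   (\<exists>x \<in> WE E I s t d \<tau> g lam. Gtot E I s t g x \<ge> B)} \<union> {0})))"
proof -
  define L where "L = {lam. lam \<ge> 0 \<and> (\<exists>x \<in> WE E I s t d \<tau> g lam. Gtot E I s t g x \<le> B)}"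
  define H where "H = {lam. lam \<ge> 0 \<and> (\<exists>x \<in> WE E I s t d \<tau> g lam. Gtot E I s t g x \<ge> B)}"
  have L_M: "lam \<in> L \<longleftrightarrow> lam \<ge> 0 \<and> (\<exists>x\<in>M lam. GG x \<le> B)" for lam by (simp add: L_def WE_eq_M)
  have H_M: "lam \<in> H \<longleftrightarrow> lam \<ge> 0 \<and> (\<exists>x\<in>M lam. GG x \<ge> B)" for lam by (simp add: H_def WE_eq_M)
  have Lne: "L \<noteq> {}" using L_ne L_M by blast
  have Lbdd: "bdd_below L" by (rule bdd_belowI[of _ 0]) (auto simp: L_def)
  define lo where "lo = Inf L"
  have lo_le: "lo \<le> lam" if "lam \<in> L" for lam unfolding lo_def using Lbdd that by (intro cInf_lower)
  have lo0: "lo \<ge> 0" unfolding lo_def using Lne by (intro cInf_greatest) (auto simp: L_def)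
  have loL: "lo \<in> L"
  proof -
    have "\<forall>n. \<exists>lx. lx \<in> L \<and> lx < lo + inverse (real (Suc n))"
    proof
      fix n
      have "Inf L < lo + inverse (real (Suc n))" by (simp add: lo_def)
      thus "\<exists>lx. lx \<in> L \<and> lx < lo + inverse (real (Suc n))" using cInf_lessD[OF Lne] by blast
    qed
    from choice[OF this] obtain ls where ls: "\<forall>n. ls n \<in> L \<and> ls n < lo + inverse (real (Suc n))"
      by blast
    have "\<forall>n. \<exists>x. x \<in> M (ls n) \<and> GG x \<le> B" using ls L_M by blast
    from choice[OF this] obtain xs where xs: "\<forall>n. xs n \<in> M (ls n) \<and> GG (xs n) \<le> B" by blast
    have lsconv: "ls \<longlonglongrightarrow> lo"
    proof (rule tendsto_sandwich[of "\<lambda>n. lo" _ _ "\<lambda>n. lo + inverse (real (Suc n))"])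
      show "\<forall>\<^sub>F n in sequentially. lo \<le> ls n" using ls lo_le by auto
      show "\<forall>\<^sub>F n in sequentially. ls n \<le> lo + inverse (real (Suc n))" using ls by (auto intro!: always_eventually less_imp_le)
      show "(\<lambda>n. lo) \<longlonglongrightarrow> lo" by simp
      show "(\<lambda>n. lo + inverse (real (Suc n))) \<longlonglongrightarrow> lo" by (rule LIMSEQ_inverse_real_of_nat_add)
    qed
    obtain x r where x: "x \<in> M lo" "strict_mono r" "(\<lambda>n. GG (xs (r n))) \<longlonglongrightarrow> GG x"
      using M_closed[of ls lo xs] lsconv xs by blast
    have "GG x \<le> B" using x(3) xs by (intro LIMSEQ_le_const2) auto
    thus ?thesis using lo0 x(1) L_M by blast
  qed
  show ?thesis
    unfolding L_def[symmetric] H_def[symmetric]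
  proof (intro exI conjI allI impI)
    show "lo \<in> L" by (rule loL)
    show "\<forall>lam\<in>L. lo \<le> lam" using lo_le by blast
    fix lam :: real assume lam0: "lam \<ge> 0"
    show "market_eq_price E I s t d \<tau> B g lam \<longleftrightarrow> lo \<le> lam \<and> ereal lam \<le> Sup (ereal ` (H \<union> {0}))"
    proof
      assume "market_eq_price E I s t d \<tau> B g lam"
      then obtain x where x: "market_eq E I s t d \<tau> B g x lam" by (auto simp: market_eq_price_def)
      hence xw: "x \<in> WE E I s t d \<tau> g lam" "GG x \<le> B" "lam * (GG x - B) = 0"
        by (auto simp: market_eq_def)
      have "lam \<in> L" using xw lam0 by (auto simp: L_def)
      hence "lo \<le> lam" by (rule lo_le)
      moreover have "ereal lam \<le> Sup (ereal ` (H \<union> {0}))"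
      proof (cases "lam = 0")
        case True thus ?thesis by (intro Sup_upper imageI) auto
      next
        case False
        hence "GG x = B" using xw by simp
        hence "lam \<in> H" using xw lam0 by (auto simp: H_def)
        thus ?thesis by (intro Sup_upper imageI) auto
      qed
      ultimately show "lo \<le> lam \<and> ereal lam \<le> Sup (ereal ` (H \<union> {0}))" by blast
    next
      assume as: "lo \<le> lam \<and> ereal lam \<le> Sup (ereal ` (H \<union> {0}))"
      show "market_eq_price E I s t d \<tau> B g lam"
      proof (cases "lam = 0")
        case True
        hence "lo = 0" using as lo0 by simp
        then obtain x where x: "x \<in> WE E I s t d \<tau> g 0" "GG x \<le> B" using loL by (auto simp: L_def)
        show ?thesis unfolding market_eq_price_def market_eq_def using x True by (auto simp: WE_def)
      next
        case False
        hence lampos: "lam > 0" using lam0 by simp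
        have "\<exists>x1\<in>M lam. GG x1 \<le> B"
        proof (cases "lo = lam")
          case True thus ?thesis using loL L_M by auto
        next
          case False
          hence lt: "lo < lam" using as by simp
          obtain xl where xl: "xl \<in> M lo" "GG xl \<le> B" using loL L_M by auto
          obtain x where x: "x \<in> M lam" using M_ne by blast
          have "GG x \<le> GG xl" by (rule M_mono[OF lt xl(1) x])
          hence "GG x \<le> B" using xl by linarith
          thus ?thesis using x by blast
        qed
        then obtain x1 where x1: "x1 \<in> M lam" "GG x1 \<le> B" by blast
        have "\<exists>x2\<in>M lam. GG x2 \<ge> B"
        proof -
          have "\<forall>n. \<exists>sv. sv \<in> H \<and> lam - lam / real (Suc (Suc n)) < sv"
          proof
            fix n
            have e: "lam / real (Suc (Suc n)) > 0" "lam / real (Suc (Suc n)) < lam"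
              using lampos by (auto simp: field_simps add_pos_nonneg)
            have "ereal (lam - lam / real (Suc (Suc n))) < ereal lam" using e by simp
            also have "\<dots> \<le> Sup (ereal ` (H \<union> {0}))" using as by simp
            finally obtain z where z: "z \<in> ereal ` (H \<union> {0})" "ereal (lam - lam / real (Suc (Suc n))) < z"
              using less_Sup_iff by blast
            then obtain sv where sv: "sv \<in> H \<union> {0}" "z = ereal sv" by blast
            hence svl: "lam - lam / real (Suc (Suc n)) < sv" using z by simp
            hence "sv \<noteq> 0" using e by auto
            thus "\<exists>sv. sv \<in> H \<and> lam - lam / real (Suc (Suc n)) < sv" using sv svl by blast
          qed
          from choice[OF this] obtain ss where ss: "\<forall>n. ss n \<in> H \<and> lam - lam / real (Suc (Suc n)) < ss n"
            by blast
          show ?thesis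
          proof (cases "\<exists>n. lam \<le> ss n")
            case True
            then obtain n where n: "lam \<le> ss n" by blast
            obtain xs where xs: "xs \<in> M (ss n)" "GG xs \<ge> B" using ss H_M by blast
            show ?thesis
            proof (cases "lam = ss n")
              case True thus ?thesis using xs by auto
            next
              case False
              hence lt: "lam < ss n" using n by simp
              obtain x where x: "x \<in> M lam" using M_ne by blast
              have "GG xs \<le> GG x" by (rule M_mono[OF lt x xs(1)])
              hence "B \<le> GG x" using xs by linarith
              thus ?thesis using x by blast
            qed
          next
            case False
            hence lt: "\<forall>n. ss n \<le> lam" by (simp add: not_le less_imp_le)
            have lim0: "(\<lambda>n. lam / real (Suc (Suc n))) \<longlonglongrightarrow> 0"
              using LIMSEQ_Suc[OF LIMSEQ_Suc[OF lim_const_over_n[of lam]]] by simp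
            have sconv: "ss \<longlonglongrightarrow> lam"
            proof (rule tendsto_sandwich[of "\<lambda>n. lam - lam / real (Suc (Suc n))" _ _ "\<lambda>n. lam"])
              show "\<forall>\<^sub>F n in sequentially. lam - lam / real (Suc (Suc n)) \<le> ss n" using ss by (auto intro!: always_eventually less_imp_le)
              show "\<forall>\<^sub>F n in sequentially. ss n \<le> lam" using lt by auto
              show "(\<lambda>n. lam - lam / real (Suc (Suc n))) \<longlonglongrightarrow> lam"
                using tendsto_diff[OF tendsto_const lim0, of lam] by simp
              show "(\<lambda>n. lam) \<longlonglongrightarrow> lam" by simp
            qed
            have "\<forall>n. \<exists>x. x \<in> M (ss n) \<and> GG x \<ge> B" using ss H_M by blast
            from choice[OF this] obtain xs where xs: "\<forall>n. xs n \<in> M (ss n) \<and> GG (xs n) \<ge> B" by blast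
            obtain x r where x: "x \<in> M lam" "strict_mono r" "(\<lambda>n. GG (xs (r n))) \<longlonglongrightarrow> GG x"
              using M_closed[of ss lam xs] sconv xs by blast
            have "B \<le> GG x" using x(3) xs by (intro LIMSEQ_le_const) auto
            thus ?thesis using x(1) by blast
          qed
        qed
        then obtain x2 where x2: "x2 \<in> M lam" "GG x2 \<ge> B" by blast
        have "\<exists>z\<in>M lam. GG z = B"
        proof (cases "GG x1 = GG x2")
          case True thus ?thesis using x1 x2 by (intro bexI[of _ x1]) auto
        next
          case False
          hence ne: "GG x1 < GG x2" using x1 x2 by simp
          define u where "u = (B - GG x1)/(GG x2 - GG x1)"
          have u: "0 \<le> u" "u \<le> 1" using x1 x2 ne by (auto simp: u_def field_simps)
          have e1: "u * (GG x2 - GG x1) = B - GG x1" using ne by (simp add: u_def)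
          have e2: "(1-u)*GG x1 + u*GG x2 = GG x1 + u * (GG x2 - GG x1)" by (simp add: algebra_simps)
          have "GG (\<lambda>ip. (1-u)*x1 ip + u*x2 ip) = B" unfolding G_comb e2 e1 by simp
          thus ?thesis using M_comb[OF x1(1) x2(1) u] by blast
        qed
        then obtain z where z: "z \<in> M lam" "GG z = B" by blast
        show ?thesis unfolding market_eq_price_def market_eq_def
          using z lam0 M_sub_WE[OF z(1)] by (auto simp: M_def)
      qed
    qed
  qed
qed

end

theorem lemma5p8:
  fixes E :: "('v \<times> 'v) set" and I :: "'i set" and s t :: "'i \<Rightarrow> 'v" and d :: "'i \<Rightarrow> real"
    and B :: real and g :: "'v \<times> 'v \<Rightarrow> real"
    and \<tau> :: "'i \<times> 'v list \<Rightarrow> ('i \<times> 'v list \<Rightarrow> real) \<Rightarrow> real"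
  assumes "finite E" and "finite I" and "\<forall>i \<in> I. d i > 0"
    and "feasible_scheme E I s t d B g"
    and "has_convex_potential E I s t d \<tau>"
  shows "\<exists>lo. lo \<in> {lam. lam \<ge> 0 \<and> (\<exists>x \<in> WE E I s t d \<tau> g lam. Gtot E I s t g x \<le> B)}
          \<and> (\<forall>lam \<in> {lam. lam \<ge> 0 \<and> (\<exists>x \<in> WE E I s t d \<tau> g lam. Gtot E I s t g x \<le> B)}. lo \<le> lam)
          \<and> (\<forall>lam \<ge> 0. market_eq_price E I s t d \<tau> B g lam \<longleftrightarrow>
               lo \<le> lam \<and> ereal lam \<le> Sup (ereal ` ({lam. lam \<ge> 0 \<and>
                   (\<exists>x \<in> WE E I s t d \<tau> g lam. Gtot E I s t g x \<ge> B)} \<union> {0})))"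
proof -
  obtain \<Phi> where cvx: "\<forall>x \<in> RP E I s t. \<forall>y \<in> RP E I s t. \<forall>u::real. 0 \<le> u \<and> u \<le> 1 \<longrightarrow>
              \<Phi> (\<lambda>ip. (1 - u) * x ip + u * y ip) \<le> (1 - u) * \<Phi> x + u * \<Phi> y"
    and gr: "\<forall>x \<in> RP E I s t. \<exists>D. has_gradient_at E I s t \<Phi> x D"
    and gt: "\<forall>x \<in> flows E I s t d. has_gradient_at E I s t \<Phi> x (\<lambda>ip. \<tau> ip x)"
    using assms(5) unfolding has_convex_potential_def by blast
  interpret mkt E I s t d B g \<tau> \<Phi>
    using assms(1-4) cvx gr gt by (unfold_locales) auto
  show ?thesis by (rule main)
qed

end
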